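(* Let $n\ge2$ and let $P=(p_{ij})$ be an $n\times n$ checkerboard copula. Then there exist indices $i<i'$ and $j<j'$ in $\{1,\dots,n\}$ such that at least one of the following holds: (i) $p_{ij}\ge n^{-2}$ and $p_{i'j'}\ge n^{-2}$; (ii) $p_{i'j}\ge n^{-2}$ and $p_{ij'}\ge n^{-2}$.
   Context: An $n\times n$ checkerboard copula is a real $n\times n$ matrix with nonnegative entries whose row and column sums all equal $\frac1n$. *)

theory Defs
  imports Main "HOL.Real"
begin

definition checkerboard_copula :: "nat \<Rightarrow> (nat \<Rightarrow> nat \<Rightarrow> real) \<Rightarrow> bool" where
  "checkerboard_copula n P \<longleftrightarrow>
     (\<forall>i<n. \<forall>j<n. 0 \<le> P i j) \<and>
     (\<forall>i<n. (\<Sum>j<n. P i j) = 1 / real n) \<and>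
     (\<forall>j<n. (\<Sum>i<n. P i j) = 1 / real n)"

end

theory Submission
  imports Defs
begin

lemma big_exists:
  fixes f :: "nat \<Rightarrow> real"
  assumes "n \<ge> 1" and "(\<Sum>j<n. f j) = 1 / real n"
  shows "\<exists>j<n. f j \<ge> 1 / (real n)^2"
proof (rule ccontr)
  assume "\<not> ?thesis"
  then have "\<forall>j\<in>{..<n}. f j < 1 / (real n)^2" by auto
  then have "(\<Sum>j<n. f j) < (\<Sum>j<n. 1 / (real n)^2)"
    using assms(1) by (intro sum_strict_mono) (auto simp: lessThan_empty_iff)
  also have "\<dots> = 1 / real n" using assms(1) by (simp add: power2_eq_square)
  finally show False using assms(2) by simp
qed

lemma pick:
  fixes P :: "nat \<Rightarrow> nat \<Rightarrow> real"
  assumes "P i j \<ge> c" "P i' j' \<ge> c" "i \<noteq> i'" "j \<noteq> j'" "i < n" "i' < n" "j < n" "j' < n"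
  shows "\<exists>i i' j j'. i < i' \<and> i' < n \<and> j < j' \<and> j' < n \<and>
           ((P i j \<ge> c \<and> P i' j' \<ge> c) \<or> (P i' j \<ge> c \<and> P i j' \<ge> c))"
proof (cases "i < i'")
  case True
  show ?thesis
  proof (cases "j < j'")
    case True
    then show ?thesis using \<open>i < i'\<close> assms by blast
  next
    case False
    then have "j' < j" using assms(4) by simp
    then show ?thesis using \<open>i < i'\<close> assms by blast
  qed
next
  case False
  then have ii: "i' < i" using assms(3) by simp
  show ?thesis
  proof (cases "j < j'")
    case True
    then show ?thesis using ii assms by blast
  next
    case False
    then have "j' < j" using assms(4) by simp
    then show ?thesis using ii assms by blast
  qed
qed

theorem lemma5:
  fixes n :: nat and P :: "nat \<Rightarrow> nat \<Rightarrow> real"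
  assumes "n \<ge> 2" and "checkerboard_copula n P"
  shows "\<exists>i i' j j'. i < i' \<and> i' < n \<and> j < j' \<and> j' < n \<and>
           ((P i j \<ge> 1 / (real n)^2 \<and> P i' j' \<ge> 1 / (real n)^2) \<or>
            (P i' j \<ge> 1 / (real n)^2 \<and> P i j' \<ge> 1 / (real n)^2))"
proof -
  define c where "c = 1 / (real n)^2"
  have n1: "n \<ge> 1" using assms(1) by simp
  have row: "\<exists>j<n. P i j \<ge> c" if "i < n" for i
    using big_exists[OF n1, of "\<lambda>j. P i j"] assms(2) that
    unfolding checkerboard_copula_def c_def by auto
  have col: "\<exists>i<n. P i j \<ge> c" if "j < n" for j
    using big_exists[OF n1, of "\<lambda>i. P i j"] assms(2) that
    unfolding checkerboard_copula_def c_def by auto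
  obtain a where a: "a < n" "P 0 a \<ge> c" using row assms(1) by fastforce
  obtain b where b: "b < n" "P 1 b \<ge> c" using row[of 1] assms(1) by auto
  have "\<exists>i i' j j'. i < i' \<and> i' < n \<and> j < j' \<and> j' < n \<and>
           ((P i j \<ge> c \<and> P i' j' \<ge> c) \<or> (P i' j \<ge> c \<and> P i j' \<ge> c))"
  proof (cases "a = b")
    case False
    then show ?thesis using pick[of c P 0 a 1 b n] a b assms(1) by auto
  next
    case True
    define d where "d = (if a = 0 then 1 else (0::nat))"
    have d: "d < n" "d \<noteq> a" using assms(1) by (auto simp: d_def)
    obtain r where r: "r < n" "P r d \<ge> c" using col d(1) by blast
    show ?thesis
    proof (cases "r = 0")
      case True
      then show ?thesis using pick[of c P 0 d 1 a n] r b d \<open>a = b\<close> assms(1) by auto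
    next
      case False
      then show ?thesis using pick[of c P 0 a r d n] r a d by auto
    qed
  qed
  then show ?thesis unfolding c_def .
qed

end
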